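(* For every $b'>b>0$ and $a>0$, one has $$\mathbf{B}'_{a,b}\;\stackrel{d}{=}\;\mathbf{B}'_{a,b'}\times\left(1+\mathbf{B}'_{b'-b,b}\right),$$ where the two random variables on the right-hand side are independent.
   Context: For $p,q>0$, $\mathbf{B}'_{p,q}$ denotes a beta prime random variable with density $\frac{\Gamma(p+q)}{\Gamma(p)\Gamma(q)}\frac{x^{p-1}}{(1+x)^{p+q}}$ on $(0,\infty)$. $\stackrel{d}{=}$ denotes equality in distribution. *)

theory Defs
  imports "HOL-Probability.Probability"
begin

definition beta_prime_density :: "real \<Rightarrow> real \<Rightarrow> real \<Rightarrow> real" where
  "beta_prime_density p q x =
     (if x > 0 then Gamma (p + q) / (Gamma p * Gamma q) * x powr (p - 1) / (1 + x) powr (p + q)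
      else 0)"

end

theory Submission
  imports Defs
begin

lemma bpd_meas[measurable]: "(\<lambda>x. beta_prime_density p q x) \<in> borel_measurable borel"
  unfolding beta_prime_density_def by measurable

lemma G_int:
  fixes l p :: real assumes l: "l > 0" and p: "p > 0"
  shows "(\<integral>\<^sup>+t. ennreal (indicator {0<..} t * t powr (p-1) * exp (-(l*t))) \<partial>lborel)
     = ennreal (Gamma p / l powr p)"
proof -
  let ?I = "\<integral>\<^sup>+t. ennreal (indicator {0<..} t * t powr (p-1) * exp (-(l*t))) \<partial>lborel"
  have "ennreal (Gamma p) = (\<integral>\<^sup>+t. ennreal (indicator {0..} t * t powr (p - 1) / exp t) \<partial>lborel)"
    using Gamma_conv_nn_integral_real[OF p] .
  also have "\<dots> = ennreal l * (\<integral>\<^sup>+x. ennreal (indicator {0..} (0 + l*x) * (0 + l*x) powr (p - 1) / exp (0 + l*x)) \<partial>lborel)"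
    using nn_integral_real_affine[of "\<lambda>t. ennreal (indicator {0..} t * t powr (p - 1) / exp t)" l 0] l
    by simp
  also have "(\<integral>\<^sup>+x. ennreal (indicator {0..} (0 + l*x) * (0 + l*x) powr (p - 1) / exp (0 + l*x)) \<partial>lborel)
      = (\<integral>\<^sup>+x. ennreal (l powr (p-1)) * ennreal (indicator {0<..} x * x powr (p-1) * exp (-(l*x))) \<partial>lborel)"
  proof (intro nn_integral_cong)
    fix x :: real
    show "ennreal (indicator {0..} (0 + l*x) * (0 + l*x) powr (p - 1) / exp (0 + l*x)) =
        ennreal (l powr (p-1)) * ennreal (indicator {0<..} x * x powr (p-1) * exp (-(l*x)))"
    proof (cases "x > 0")
      case True
      then show ?thesis using l
        by (simp add: ennreal_mult'[symmetric] powr_mult exp_minus field_simps indicator_def)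
    next
      case False
      then have "x < 0 \<or> x = 0" by auto
      then show ?thesis using l
        by (auto simp: indicator_def zero_le_mult_iff)
    qed
  qed
  also have "\<dots> = ennreal (l powr (p-1)) * ?I"
    by (intro nn_integral_cmult) auto
  finally have eq0: "ennreal (Gamma p) = ennreal l * (ennreal (l powr (p-1)) * ?I)" .
  have "ennreal l * ennreal (l powr (p-1)) = ennreal (l powr p)"
    using l by (simp add: ennreal_mult'[symmetric] powr_diff)
  then have eq: "ennreal (Gamma p) = ennreal (l powr p) * ?I"
    using eq0 by (metis mult.assoc)
  have "?I = ennreal (1 / l powr p) * (ennreal (l powr p) * ?I)"
    using l by (simp add: mult.assoc[symmetric] ennreal_mult'[symmetric])
  also have "\<dots> = ennreal (Gamma p / l powr p)"
    using l p by (simp add: eq[symmetric] ennreal_mult'[symmetric] Gamma_real_pos less_imp_le)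
  finally show ?thesis .
qed


lemma BP_int:
  fixes k c s :: real assumes k: "k > 0" and c: "c > 0" and cs: "c < s"
  shows "(\<integral>\<^sup>+y. ennreal (indicator {0<..} y * y powr (c-1) / (k+y) powr s) \<partial>lborel)
     = ennreal (k powr (c-s) * Gamma c * Gamma (s-c) / Gamma s)"
proof -
  have s: "s > 0" using c cs by simp
  have Gs: "Gamma s > 0" using s by (simp add: Gamma_real_pos)
  define H where "H = (\<lambda>y u::real. ennreal (indicator {0<..} y * y powr (c-1) / Gamma s *
        (indicator {0<..} u * u powr (s-1) * exp (-((k+y)*u)))))"
  have Hm[measurable]: "(\<lambda>(y,u). H y u) \<in> borel_measurable (lborel \<Otimes>\<^sub>M lborel)"
    unfolding H_def by measurable
  have "(\<integral>\<^sup>+y. ennreal (indicator {0<..} y * y powr (c-1) / (k+y) powr s) \<partial>lborel)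
      = (\<integral>\<^sup>+y. \<integral>\<^sup>+u. H y u \<partial>lborel \<partial>lborel)"
  proof (intro nn_integral_cong)
    fix y :: real
    show "ennreal (indicator {0<..} y * y powr (c-1) / (k+y) powr s) = (\<integral>\<^sup>+u. H y u \<partial>lborel)"
    proof (cases "y > 0")
      case True
      have "(\<integral>\<^sup>+u. H y u \<partial>lborel) = (\<integral>\<^sup>+u. ennreal (y powr (c-1) / Gamma s) *
          ennreal (indicator {0<..} u * u powr (s-1) * exp (-((k+y)*u))) \<partial>lborel)"
        unfolding H_def using True Gs
        by (intro nn_integral_cong) (simp add: ennreal_mult'[symmetric])
      also have "\<dots> = ennreal (y powr (c-1) / Gamma s) *
          (\<integral>\<^sup>+u. ennreal (indicator {0<..} u * u powr (s-1) * exp (-((k+y)*u))) \<partial>lborel)"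
        by (intro nn_integral_cmult) auto
      also have "\<dots> = ennreal (y powr (c-1) / Gamma s) * ennreal (Gamma s / (k+y) powr s)"
        using G_int[of "k+y" s] True k s by simp
      also have "\<dots> = ennreal (indicator {0<..} y * y powr (c-1) / (k+y) powr s)"
        using True Gs by (simp add: ennreal_mult'[symmetric])
      finally show ?thesis by simp
    next
      case False
      then show ?thesis by (simp add: H_def)
    qed
  qed
  also have "\<dots> = (\<integral>\<^sup>+u. \<integral>\<^sup>+y. H y u \<partial>lborel \<partial>lborel)"
    using Hm by (intro lborel_pair.Fubini') simp
  also have "\<dots> = (\<integral>\<^sup>+u. ennreal (Gamma c / Gamma s) *
       ennreal (indicator {0<..} u * u powr ((s-c)-1) * exp (-(k*u))) \<partial>lborel)"
  proof (intro nn_integral_cong)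
    fix u :: real
    show "(\<integral>\<^sup>+y. H y u \<partial>lborel) = ennreal (Gamma c / Gamma s) *
       ennreal (indicator {0<..} u * u powr ((s-c)-1) * exp (-(k*u)))"
    proof (cases "u > 0")
      case True
      have "(\<integral>\<^sup>+y. H y u \<partial>lborel) = (\<integral>\<^sup>+y. ennreal (u powr (s-1) * exp (-(k*u)) / Gamma s) *
          ennreal (indicator {0<..} y * y powr (c-1) * exp (-(u*y))) \<partial>lborel)"
        unfolding H_def using True Gs
        by (intro nn_integral_cong)
           (simp add: ennreal_mult'[symmetric] indicator_def distrib_right mult_exp_exp algebra_simps)
      also have "\<dots> = ennreal (u powr (s-1) * exp (-(k*u)) / Gamma s) *
          (\<integral>\<^sup>+y. ennreal (indicator {0<..} y * y powr (c-1) * exp (-(u*y))) \<partial>lborel)"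
        by (intro nn_integral_cmult) auto
      also have "\<dots> = ennreal (u powr (s-1) * exp (-(k*u)) / Gamma s) * ennreal (Gamma c / u powr c)"
        using G_int[of u c] True c by simp
      also have "\<dots> = ennreal (Gamma c / Gamma s) *
          ennreal (indicator {0<..} u * u powr ((s-c)-1) * exp (-(k*u)))"
        using True Gs c by (simp add: ennreal_mult'[symmetric] Gamma_real_pos powr_diff powr_add field_simps)
      finally show ?thesis .
    next
      case False
      then show ?thesis by (simp add: H_def)
    qed
  qed
  also have "\<dots> = ennreal (Gamma c / Gamma s) *
       (\<integral>\<^sup>+u. ennreal (indicator {0<..} u * u powr ((s-c)-1) * exp (-(k*u))) \<partial>lborel)"
    by (intro nn_integral_cmult) auto
  also have "\<dots> = ennreal (Gamma c / Gamma s) * ennreal (Gamma (s-c) / k powr (s-c))"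
    using G_int[of k "s-c"] k cs by simp
  also have "\<dots> = ennreal (k powr (c-s) * Gamma c * Gamma (s-c) / Gamma s)"
    using Gs c cs k by (simp add: ennreal_mult'[symmetric] Gamma_real_pos powr_diff powr_minus field_simps)
  finally show ?thesis .
qed


lemma K_identity:
  fixes a b' c y z C1 C2 :: real
  assumes y: "y > 0" and z: "z > 0"
  shows "C1 * (z/(1+y)) powr (a-1) / (1 + z/(1+y)) powr (a+b') * (C2 * y powr (c-1) / (1+y) powr b') / (1+y)
     = C1 * C2 * z powr (a-1) * (y powr (c-1) / ((1+z)+y) powr (a+b'))"
proof -
  define w where "w = 1 + y"
  have w: "w > 0" using y by (simp add: w_def)
  have e1: "(z/w) powr (a-1) = z powr (a-1) / w powr (a-1)" using w z by (simp add: powr_divide)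
  have "1 + z/w = ((1+z)+y)/w" using w by (simp add: w_def field_simps)
  then have e2: "(1 + z/w) powr (a+b') = ((1+z)+y) powr (a+b') / w powr (a+b')"
    using w z y by (simp add: powr_divide)
  have e3: "w powr (a+b') = w powr (a-1) * w powr b' * w"
  proof -
    have "w powr (a+b') = w powr ((a-1) + b' + 1)" by simp
    also have "\<dots> = w powr (a-1) * w powr b' * w" using w by (simp only: powr_add powr_one)
    finally show ?thesis .
  qed
  have pos: "w powr (a-1) > 0" "w powr b' > 0" "((1+z)+y) powr (a+b') > 0" using w y z by auto
  show ?thesis unfolding w_def[symmetric] e1 e2 e3 using w pos
    by (simp add: field_simps)
qed


theorem proposition1:
  fixes M :: "'s measure" and X Y :: "'s \<Rightarrow> real" and a b b' :: real
  assumes "prob_space M"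
    and "0 < b" and "b < b'" and "0 < a"
    and "distributed M lborel X (\<lambda>x. ennreal (beta_prime_density a b' x))"
    and "distributed M lborel Y (\<lambda>y. ennreal (beta_prime_density (b' - b) b y))"
    and "prob_space.indep_var M borel X borel Y"
  shows "distributed M lborel (\<lambda>\<omega>. X \<omega> * (1 + Y \<omega>)) (\<lambda>z. ennreal (beta_prime_density a b z))"
proof -
  interpret prob_space M by fact
  define fX where "fX = beta_prime_density a b'"
  define fY where "fY = beta_prime_density (b' - b) b"
  define fZ where "fZ = beta_prime_density a b"
  have [measurable]: "fX \<in> borel_measurable borel" "fY \<in> borel_measurable borel" "fZ \<in> borel_measurable borel"
    unfolding fX_def fY_def fZ_def by measurable
  have indep': "indep_var lborel X lborel Y"
    using assms(7) by (simp add: indep_var_def indep_vars_def bool.case_eq_if)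
  have J: "distributed M (lborel \<Otimes>\<^sub>M lborel) (\<lambda>\<omega>. (X \<omega>, Y \<omega>)) (\<lambda>(x,y). ennreal (fX x) * ennreal (fY y))"
    using distributed_joint_indep[OF _ _ assms(5) assms(6) indep']
    unfolding fX_def fY_def by (simp add: lborel.sigma_finite_measure_axioms)
  have Xm[measurable]: "X \<in> borel_measurable M" using assms(5) by (simp add: distributed_def)
  have Ym[measurable]: "Y \<in> borel_measurable M" using assms(6) by (simp add: distributed_def)
  define K where "K = (\<lambda>y z. ennreal (fX (z/(1+y)) * fY y / (1+y)))"
  have Km[measurable]: "(\<lambda>(y,z). K y z) \<in> borel_measurable (lborel \<Otimes>\<^sub>M lborel)"
    unfolding K_def by measurable
  have fX0: "fX x = 0" if "x \<le> 0" for x using that by (simp add: fX_def beta_prime_density_def)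
  have fY0: "fY y = 0" if "y \<le> 0" for y using that by (simp add: fY_def beta_prime_density_def)
  have bnn: "beta_prime_density p q x \<ge> 0" if "p > 0" "q > 0" for p q x
    using that unfolding beta_prime_density_def
    by (auto intro!: divide_nonneg_nonneg mult_nonneg_nonneg simp: Gamma_real_pos less_imp_le)
  have fXnn: "fX x \<ge> 0" for x using assms unfolding fX_def by (intro bnn) auto
  have fYnn: "fY x \<ge> 0" for x using assms unfolding fY_def by (intro bnn) auto
  have stepY: "(\<integral>\<^sup>+x. ennreal (fX x) * ennreal (fY y) * indicator A (x*(1+y)) \<partial>lborel)
      = (\<integral>\<^sup>+z. K y z * indicator A z \<partial>lborel)" if A[measurable]: "A \<in> sets borel" for A y
  proof (cases "y > 0")
    case True
    have "(\<integral>\<^sup>+z. K y z * indicator A z \<partial>lborel)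
        = ennreal (1+y) * (\<integral>\<^sup>+x. K y (0 + (1+y)*x) * indicator A (0 + (1+y)*x) \<partial>lborel)"
    proof -
      have "(\<integral>\<^sup>+z. K y z * indicator A z \<partial>lborel)
        = ennreal \<bar>1+y\<bar> * (\<integral>\<^sup>+x. K y (0 + (1+y)*x) * indicator A (0 + (1+y)*x) \<partial>lborel)"
        using True by (intro nn_integral_real_affine) (auto simp: K_def)
      moreover have "\<bar>1+y\<bar> = 1 + y" using True by simp
      ultimately show ?thesis by metis
    qed
    also have "(\<integral>\<^sup>+x. K y (0 + (1+y)*x) * indicator A (0 + (1+y)*x) \<partial>lborel)
        = (\<integral>\<^sup>+x. ennreal (1/(1+y)) * (ennreal (fX x) * ennreal (fY y) * indicator A (x*(1+y))) \<partial>lborel)"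
    proof (intro nn_integral_cong)
      fix x :: real
      have "(1+y)*x/(1+y) = x" using True by simp
      then have "K y (0 + (1+y)*x) = ennreal (1/(1+y)) * (ennreal (fX x) * ennreal (fY y))"
        using True fXnn fYnn by (simp add: K_def ennreal_mult'[symmetric] ennreal_mult[symmetric])
      then show "K y (0 + (1+y)*x) * indicator A (0 + (1+y)*x) = ennreal (1/(1+y)) * (ennreal (fX x) * ennreal (fY y) * indicator A (x*(1+y)))"
        by (simp add: ac_simps)
    qed
    also have "\<dots> = ennreal (1/(1+y)) * (\<integral>\<^sup>+x. ennreal (fX x) * ennreal (fY y) * indicator A (x*(1+y)) \<partial>lborel)"
      by (subst nn_integral_cmult) auto
    also have "ennreal (1+y) * (ennreal (1/(1+y)) * (\<integral>\<^sup>+x. ennreal (fX x) * ennreal (fY y) * indicator A (x*(1+y)) \<partial>lborel)) = (\<integral>\<^sup>+x. ennreal (fX x) * ennreal (fY y) * indicator A (x*(1+y)) \<partial>lborel)"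
    proof -
      have e: "ennreal (1+y) * ennreal (1/(1+y)) = 1"
        using True by (subst ennreal_mult[symmetric]) auto
      show ?thesis by (simp only: mult.assoc[symmetric] e mult_1)
    qed
    finally show ?thesis by simp
  next
    case False
    then show ?thesis by (simp add: K_def fY0)
  qed
  have stepZ: "(\<integral>\<^sup>+y. K y z \<partial>lborel) = ennreal (fZ z)" for z
  proof (cases "z > 0")
    case False
    have "K y z = 0" for y
    proof (cases "y > 0")
      case True
      then have "z/(1+y) \<le> 0" using False by (simp add: divide_nonpos_pos)
      then show ?thesis by (simp add: K_def fX0)
    qed (simp add: K_def fY0)
    then show ?thesis using False by (simp add: fZ_def beta_prime_density_def)
  next
    case True
    define C1 where "C1 = Gamma (a + b') / (Gamma a * Gamma b')"
    define C2 where "C2 = Gamma b' / (Gamma (b'-b) * Gamma b)"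
    have C: "C1 \<ge> 0" "C2 \<ge> 0" using assms by (auto simp: C1_def C2_def Gamma_real_pos)
    have "K y z = ennreal (C1 * C2 * z powr (a-1)) * ennreal (indicator {0<..} y * y powr ((b'-b)-1) / ((1+z)+y) powr (a+b'))" for y
    proof (cases "y > 0")
      case True
      have "fX (z/(1+y)) * fY y / (1+y) = C1 * (z/(1+y)) powr (a-1) / (1 + z/(1+y)) powr (a+b') * (C2 * y powr ((b'-b)-1) / (1+y) powr b') / (1+y)"
        using True \<open>z > 0\<close> by (simp add: fX_def fY_def beta_prime_density_def C1_def C2_def)
      also have "\<dots> = C1 * C2 * z powr (a-1) * (y powr ((b'-b)-1) / ((1+z)+y) powr (a+b'))"
        by (rule K_identity[OF True \<open>z > 0\<close>])
      finally show ?thesis using True C by (simp add: K_def ennreal_mult'[symmetric])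
    qed (simp add: K_def fY0)
    then have "(\<integral>\<^sup>+y. K y z \<partial>lborel) = ennreal (C1 * C2 * z powr (a-1)) * (\<integral>\<^sup>+y. ennreal (indicator {0<..} y * y powr ((b'-b)-1) / ((1+z)+y) powr (a+b')) \<partial>lborel)"
      by (simp add: nn_integral_cmult)
    also have "\<dots> = ennreal (C1 * C2 * z powr (a-1)) * ennreal ((1+z) powr ((b'-b)-(a+b')) * Gamma (b'-b) * Gamma ((a+b')-(b'-b)) / Gamma (a+b'))"
      using True assms by (subst BP_int) auto
    also have "\<dots> = ennreal (fZ z)"
    proof -
      have "C1 * C2 * z powr (a-1) * ((1+z) powr ((b'-b)-(a+b')) * Gamma (b'-b) * Gamma ((a+b')-(b'-b)) / Gamma (a+b'))
          = Gamma (a+b) / (Gamma a * Gamma b) * z powr (a-1) / (1+z) powr (a+b)"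
      proof -
        have g: "Gamma (a+b') > 0" "Gamma (b'-b) > 0" "Gamma b' > 0" "Gamma a > 0" "Gamma b > 0" "Gamma (a+b) > 0"
          using assms by (auto intro!: Gamma_real_pos)
        have e1: "(b'-b)-(a+b') = -(a+b)" "(a+b')-(b'-b) = a+b" by simp_all
        have e2: "(1+z) powr (-(a+b)) = 1 / (1+z) powr (a+b)" using True by (simp only: powr_minus divide_inverse mult_1)
        have "(1+z) powr (a+b) > 0" using True by simp
        then show ?thesis unfolding e1 e2 C1_def C2_def using g by (simp add: field_simps)
      qed
      then show ?thesis using True C
        by (simp add: fZ_def beta_prime_density_def ennreal_mult'[symmetric])
    qed
    finally show ?thesis .
  qed
  show ?thesis unfolding distributed_def
  proof (intro conjI)
    show "(\<lambda>z. ennreal (beta_prime_density a b z)) \<in> borel_measurable lborel" by measurable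
    show "(\<lambda>\<omega>. X \<omega> * (1 + Y \<omega>)) \<in> measurable M lborel" by measurable
    show "distr M lborel (\<lambda>\<omega>. X \<omega> * (1 + Y \<omega>)) = density lborel (\<lambda>z. ennreal (beta_prime_density a b z))"
    proof (rule measure_eqI)
      show "sets (distr M lborel (\<lambda>\<omega>. X \<omega> * (1 + Y \<omega>))) = sets (density lborel (\<lambda>z. ennreal (beta_prime_density a b z)))"
        by simp
      fix A assume "A \<in> sets (distr M lborel (\<lambda>\<omega>. X \<omega> * (1 + Y \<omega>)))"
      then have A[measurable]: "A \<in> sets borel" by simp
      define B where "B = (\<lambda>(x,y). x * (1+y)) -` A \<inter> space (lborel \<Otimes>\<^sub>M lborel :: (real \<times> real) measure)"
      have B[measurable]: "B \<in> sets (lborel \<Otimes>\<^sub>M lborel)" unfolding B_def by measurable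
      have "emeasure (distr M lborel (\<lambda>\<omega>. X \<omega> * (1 + Y \<omega>))) A
          = emeasure M ((\<lambda>\<omega>. (X \<omega>, Y \<omega>)) -` B \<inter> space M)"
        by (subst emeasure_distr) (auto simp: B_def space_pair_measure intro!: arg_cong2[where f=emeasure])
      also have "\<dots> = (\<integral>\<^sup>+p. (case p of (x,y) \<Rightarrow> ennreal (fX x) * ennreal (fY y)) * indicator B p \<partial>(lborel \<Otimes>\<^sub>M lborel))"
        by (rule distributed_emeasure[OF J B])
      also have "\<dots> = (\<integral>\<^sup>+p. (\<lambda>(x,y). ennreal (fX x) * ennreal (fY y) * indicator A (x*(1+y))) p \<partial>(lborel \<Otimes>\<^sub>M lborel))"
        by (intro nn_integral_cong) (auto simp: B_def space_pair_measure indicator_def split: prod.split)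
      also have "\<dots> = (\<integral>\<^sup>+x. \<integral>\<^sup>+y. ennreal (fX x) * ennreal (fY y) * indicator A (x*(1+y)) \<partial>lborel \<partial>lborel)"
        by (subst lborel.nn_integral_fst[symmetric]) auto
      also have "\<dots> = (\<integral>\<^sup>+y. \<integral>\<^sup>+x. ennreal (fX x) * ennreal (fY y) * indicator A (x*(1+y)) \<partial>lborel \<partial>lborel)"
        by (rule lborel_pair.Fubini'[where f="\<lambda>y x. ennreal (fX x) * ennreal (fY y) * indicator A (x*(1+y))"]) measurable
      also have "\<dots> = (\<integral>\<^sup>+y. \<integral>\<^sup>+z. K y z * indicator A z \<partial>lborel \<partial>lborel)"
        by (intro nn_integral_cong stepY A)
      also have "\<dots> = (\<integral>\<^sup>+z. \<integral>\<^sup>+y. K y z * indicator A z \<partial>lborel \<partial>lborel)"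
        by (rule lborel_pair.Fubini'[where f="\<lambda>z y. K y z * indicator A z"]) (unfold K_def, measurable)
      also have "\<dots> = (\<integral>\<^sup>+z. ennreal (fZ z) * indicator A z \<partial>lborel)"
        by (intro nn_integral_cong) (simp add: nn_integral_multc stepZ)
      also have "\<dots> = emeasure (density lborel (\<lambda>z. ennreal (beta_prime_density a b z))) A"
        by (simp add: emeasure_density fZ_def)
      finally show "emeasure (distr M lborel (\<lambda>\<omega>. X \<omega> * (1 + Y \<omega>))) A = emeasure (density lborel (\<lambda>z. ennreal (beta_prime_density a b z))) A" .
    qed
  qed
qed

end
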